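(* For each $i\in\{1,\dots,n\}$, $$\sum_{\mu\in P_i}\mu=\frac{m_i\,|P_i|}{(\tilde\omega_i,\tilde\omega_i)}\,\tilde\omega_i;$$ in particular the barycenter of the weights in the $i$th coordinate face $F_i$ is parallel to $\tilde\omega_i$ (a multiple of the $i$th fundamental weight).
   Context: Let $\mathfrak g$ be a finite-dimensional complex simple Lie algebra with root system $\Phi$, base $\Pi=\{\alpha_1,\dots,\alpha_n\}$, Weyl group $W$; $E$ is the real span of $\Pi$ with $W$-invariant inner product $(\cdot,\cdot)$. Let $\omega_i$ be the fundamental weights and $\tilde\omega_i=2\omega_i/(\alpha_i,\alpha_i)$, so $(\tilde\omega_i,\alpha_j)=\delta_{ij}$. Fix a dominant integral weight $\lambda=\sum_i m_i\alpha_i$ and let $P(\lambda)$ be the set of weights of the irreducible module of highest weight $\lambda$. $P_i=\{\mu\in P(\lambda)\mid(\mu,\tilde\omega_i)=m_i\}$ and $F_i=\mathrm{conv}(P_i)$ is the $i$th coordinate face of $\mathbf P=\mathrm{conv}(W\lambda)$. *)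

theory Defs
  imports "HOL-Analysis.Analysis"
begin

text \<open>Root-system level rendering. Vectors live in a Euclidean space 'a; the base
\<Pi> = {\<alpha>_i} is indexed by a finite type 'i; E = span of the base.\<close>

definition cpair :: "'a::euclidean_space \<Rightarrow> 'a \<Rightarrow> real" where
  "cpair v a = 2 * (v \<bullet> a) / (a \<bullet> a)"

definition reflection :: "'a::euclidean_space \<Rightarrow> 'a \<Rightarrow> 'a" where
  "reflection a v = v - cpair v a *\<^sub>R a"

definition root_system :: "'a::euclidean_space set \<Rightarrow> bool" where
  "root_system \<Phi> \<longleftrightarrow> finite \<Phi> \<and> \<Phi> \<noteq> {} \<and> 0 \<notin> \<Phi> \<and>
     (\<forall>a\<in>\<Phi>. reflection a ` \<Phi> = \<Phi>) \<and>
     (\<forall>a\<in>\<Phi>. \<forall>b\<in>\<Phi>. cpair b a \<in> \<int>) \<and>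
     (\<forall>a\<in>\<Phi>. \<forall>c::real. c *\<^sub>R a \<in> \<Phi> \<longrightarrow> c = 1 \<or> c = -1)"

definition irreducible_rs :: "'a::euclidean_space set \<Rightarrow> bool" where
  "irreducible_rs \<Phi> \<longleftrightarrow> \<not> (\<exists>A B. A \<union> B = \<Phi> \<and> A \<noteq> {} \<and> B \<noteq> {} \<and>
       (\<forall>a\<in>A. \<forall>b\<in>B. a \<bullet> b = 0))"

definition is_base :: "'a::euclidean_space set \<Rightarrow> ('i::finite \<Rightarrow> 'a) \<Rightarrow> bool" where
  "is_base \<Phi> \<alpha> \<longleftrightarrow> inj \<alpha> \<and> independent (range \<alpha>) \<and> range \<alpha> \<subseteq> \<Phi> \<and>
     (\<forall>b\<in>\<Phi>. \<exists>c::'i \<Rightarrow> int. b = (\<Sum>j\<in>UNIV. of_int (c j) *\<^sub>R \<alpha> j) \<and>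
                ((\<forall>j. c j \<ge> 0) \<or> (\<forall>j. c j \<le> 0)))"

definition fund_weight :: "('i::finite \<Rightarrow> 'a::euclidean_space) \<Rightarrow> 'i \<Rightarrow> 'a" where
  "fund_weight \<alpha> i = (THE v. v \<in> span (range \<alpha>) \<and>
       (\<forall>j. cpair v (\<alpha> j) = (if j = i then 1 else 0)))"

definition fund_weight_tilde :: "('i::finite \<Rightarrow> 'a::euclidean_space) \<Rightarrow> 'i \<Rightarrow> 'a" where
  "fund_weight_tilde \<alpha> i = (2 / (\<alpha> i \<bullet> \<alpha> i)) *\<^sub>R fund_weight \<alpha> i"

definition dominant_integral :: "('i::finite \<Rightarrow> 'a::euclidean_space) \<Rightarrow> 'a \<Rightarrow> bool" where
  "dominant_integral \<alpha> lam \<longleftrightarrow> lam \<in> span (range \<alpha>) \<and>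
     (\<forall>i. \<exists>k::nat. cpair lam (\<alpha> i) = of_nat k)"

text \<open>P(lam): the weights of the irreducible module of highest weight lam, i.e. the
smallest saturated set of weights containing lam (closed under alpha-strings):
if mu is a weight, a a root and 0 \<le> k \<le> <mu, a^vee>, then mu - k a is a weight.\<close>
inductive_set weights_of :: "'a::euclidean_space set \<Rightarrow> 'a \<Rightarrow> 'a set"
  for \<Phi> :: "'a set" and lam :: 'a where
  hw: "lam \<in> weights_of \<Phi> lam"
| string: "\<lbrakk>mu \<in> weights_of \<Phi> lam; a \<in> \<Phi>; 0 \<le> k; of_int k \<le> cpair mu a\<rbrakk>
            \<Longrightarrow> mu - of_int k *\<^sub>R a \<in> weights_of \<Phi> lam"

definition face_weights ::
  "'a::euclidean_space set \<Rightarrow> ('i::finite \<Rightarrow> 'a) \<Rightarrow> 'a \<Rightarrow> ('i \<Rightarrow> real) \<Rightarrow> 'i \<Rightarrow> 'a set" where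
  "face_weights \<Phi> \<alpha> lam m i = {mu \<in> weights_of \<Phi> lam. mu \<bullet> fund_weight_tilde \<alpha> i = m i}"

end

theory Submission
  imports Defs
begin

lemma cpair_diff: "cpair (x - y) a = cpair x a - cpair y a"
  unfolding cpair_def by (simp add: inner_diff_left diff_divide_distrib)

lemma cpair_scale: "cpair (c *\<^sub>R x) a = c * cpair x a"
  unfolding cpair_def by simp

lemma cpair_self: "a \<noteq> 0 \<Longrightarrow> cpair a a = 2"
  unfolding cpair_def by simp

lemma refl_neg: "a \<noteq> 0 \<Longrightarrow> reflection a a = - a"
  unfolding reflection_def by (simp add: cpair_self scaleR_2)

lemma cpair_refl: "a \<noteq> 0 \<Longrightarrow> cpair (reflection a v) a = - cpair v a"
  unfolding reflection_def by (simp add: cpair_diff cpair_scale cpair_self)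

lemma refl_invol: "a \<noteq> 0 \<Longrightarrow> reflection a (reflection a v) = v"
  using cpair_refl[of a v] unfolding reflection_def[of a "reflection a v"]
  by (simp add: reflection_def)

lemma weights_int:
  assumes rs: "root_system \<Phi>" and b: "\<forall>j. \<alpha> j \<in> \<Phi>"
    and lamint: "\<forall>j. cpair lam (\<alpha> j) \<in> \<int>"
    and mu: "mu \<in> weights_of \<Phi> lam"
  shows "cpair mu (\<alpha> j) \<in> \<int>"
  using mu
proof induction
  case hw then show ?case using lamint by auto
next
  case (string mu a k)
  have "cpair a (\<alpha> j) \<in> \<int>" using rs b string unfolding root_system_def by auto
  then show ?case using string by (simp add: cpair_diff cpair_scale)
qed

lemma weights_refl:
  assumes rs: "root_system \<Phi>" and a: "a \<in> \<Phi>"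
    and mu: "mu \<in> weights_of \<Phi> lam" and int: "cpair mu a \<in> \<int>"
  shows "reflection a mu \<in> weights_of \<Phi> lam"
proof -
  have a0: "a \<noteq> 0" using rs a unfolding root_system_def by auto
  obtain k where k: "cpair mu a = of_int k" using int by (elim Ints_cases) blast
  show ?thesis
  proof (cases "k \<ge> 0")
    case True
    have "mu - of_int k *\<^sub>R a \<in> weights_of \<Phi> lam"
      by (rule weights_of.string[OF mu a True]) (simp add: k)
    then show ?thesis by (simp add: reflection_def k)
  next
    case False
    have "reflection a ` \<Phi> = \<Phi>" using rs a unfolding root_system_def by blast
    then have na: "- a \<in> \<Phi>" using a refl_neg[OF a0] by (metis imageI)
    have "mu - of_int (-k) *\<^sub>R (-a) \<in> weights_of \<Phi> lam"
    proof (rule weights_of.string[OF mu na])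
      show "0 \<le> - k" using False by simp
      have "cpair mu (- a) = - cpair mu a" by (simp add: cpair_def)
      then show "real_of_int (- k) \<le> cpair mu (- a)" using k by simp
    qed
    then show ?thesis by (simp add: reflection_def k)
  qed
qed

lemma weights_span:
  assumes "\<Phi> \<subseteq> span B" and "lam \<in> span B" and "mu \<in> weights_of \<Phi> lam"
  shows "mu \<in> span B"
  using assms(3)
proof induction
  case hw then show ?case using assms by auto
next
  case (string mu a k)
  then show ?case using assms(1) by (auto intro: span_diff span_mul)
qed

lemma fund_weight_props:
  fixes \<alpha> :: "'i::finite \<Rightarrow> 'a::euclidean_space"
  assumes inj: "inj \<alpha>" and ind: "independent (range \<alpha>)" and nz: "\<forall>j. \<alpha> j \<noteq> 0"
  shows "fund_weight \<alpha> i \<in> span (range \<alpha>) \<and>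
       (\<forall>j. cpair (fund_weight \<alpha> i) (\<alpha> j) = (if j = i then 1 else 0))"
proof -
  let ?P = "\<lambda>v. v \<in> span (range \<alpha>) \<and> (\<forall>j. cpair v (\<alpha> j) = (if j = i then 1 else 0))"
  obtain y z where y: "y \<in> span (\<alpha> ` (UNIV - {i}))"
    and z: "\<And>w. w \<in> span (\<alpha> ` (UNIV - {i})) \<Longrightarrow> orthogonal z w"
    and eq: "\<alpha> i = y + z"
    using orthogonal_subspace_decomp_exists[of "\<alpha> ` (UNIV - {i})" "\<alpha> i"] by blast
  have sub: "span (\<alpha> ` (UNIV - {i})) \<subseteq> span (range \<alpha>)" by (rule span_mono) auto
  have zsp: "z \<in> span (range \<alpha>)"
  proof -
    have "z = \<alpha> i - y" using eq by simp
    moreover have "\<alpha> i \<in> span (range \<alpha>)" by (rule span_base) simp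
    moreover have "y \<in> span (range \<alpha>)" using y sub by blast
    ultimately show ?thesis by (simp add: span_diff)
  qed
  have img: "range \<alpha> - {\<alpha> i} = \<alpha> ` (UNIV - {i})" using inj by (auto simp: inj_def)
  have z0: "z \<noteq> 0"
  proof
    assume "z = 0"
    then have "\<alpha> i \<in> span (range \<alpha> - {\<alpha> i})" using eq y img by simp
    then show False using ind unfolding dependent_def by auto
  qed
  have zj: "z \<bullet> \<alpha> j = 0" if "j \<noteq> i" for j
    using z[of "\<alpha> j"] that by (auto simp: orthogonal_def intro: span_base)
  have zy: "z \<bullet> y = 0" using z[OF y] by (simp add: orthogonal_def)
  have zi: "z \<bullet> \<alpha> i = z \<bullet> z" using eq zy by (simp add: inner_add_right)
  have zz: "z \<bullet> z > 0" using z0 by simp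
  have ai: "\<alpha> i \<bullet> \<alpha> i > 0" using nz by simp
  define v where "v = ((\<alpha> i \<bullet> \<alpha> i) / (2 * (z \<bullet> z))) *\<^sub>R z"
  have Pv: "?P v"
  proof
    show "v \<in> span (range \<alpha>)" unfolding v_def using zsp by (rule span_mul)
    show "\<forall>j. cpair v (\<alpha> j) = (if j = i then 1 else 0)"
    proof
      fix j show "cpair v (\<alpha> j) = (if j = i then 1 else 0)"
      proof (cases "j = i")
        case True
        have "v \<bullet> \<alpha> i = ((\<alpha> i \<bullet> \<alpha> i) / (2 * (z \<bullet> z))) * (z \<bullet> z)"
          unfolding v_def using zi by simp
        also have "\<dots> = (\<alpha> i \<bullet> \<alpha> i) / 2" using zz by simp
        finally show ?thesis using True ai by (simp add: cpair_def)
      next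
        case False
        then show ?thesis using zj[of j] by (simp add: v_def cpair_def)
      qed
    qed
  qed
  have uniq: "w = v" if "?P w" for w
  proof -
    have d: "w - v \<in> span (range \<alpha>)" using that Pv by (auto intro: span_diff)
    have o: "(w - v) \<bullet> \<alpha> j = 0" for j
    proof -
      have "cpair w (\<alpha> j) = cpair v (\<alpha> j)" using that Pv by auto
      then have "cpair (w - v) (\<alpha> j) = 0" by (simp add: cpair_diff)
      then show ?thesis using nz[rule_format, of j] by (simp add: cpair_def)
    qed
    have "orthogonal (w - v) (w - v)"
      by (rule orthogonal_to_span[OF d]) (auto simp: orthogonal_def o)
    then show ?thesis by (simp add: orthogonal_def)
  qed
  have "?P (THE v. ?P v)" by (rule theI[of ?P v, OF Pv uniq])
  then show ?thesis unfolding fund_weight_def .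
qed

lemma one_dim:
  fixes \<alpha> :: "'i::finite \<Rightarrow> 'a::euclidean_space"
  assumes inj: "inj \<alpha>" and w: "w \<in> span (range \<alpha>)"
    and o: "\<forall>j. j \<noteq> i \<longrightarrow> w \<bullet> \<alpha> j = 0 \<and> t \<bullet> \<alpha> j = 0"
    and ti: "t \<bullet> \<alpha> i = 1" and wt: "w \<bullet> t = 0"
  shows "w = 0"
proof -
  obtain u where u: "w = (\<Sum>x\<in>range \<alpha>. u x *\<^sub>R x)"
    using w span_finite[of "range \<alpha>"] by auto
  have w2: "w = (\<Sum>j\<in>UNIV. u (\<alpha> j) *\<^sub>R \<alpha> j)"
    using u sum.reindex[OF inj, of "\<lambda>x. u x *\<^sub>R x"] by simp
  have ip: "w \<bullet> x = (\<Sum>j\<in>UNIV. u (\<alpha> j) * (\<alpha> j \<bullet> x))" for x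
    by (subst w2) (simp add: inner_sum_left)
  have split: "(\<Sum>j\<in>UNIV. f j) = f i + (\<Sum>j\<in>UNIV - {i}. f j)" for f :: "'i \<Rightarrow> real"
    by (simp add: sum.remove)
  have "w \<bullet> t = u (\<alpha> i)"
    using ip[of t] split[of "\<lambda>j. u (\<alpha> j) * (\<alpha> j \<bullet> t)"] o ti
    by (simp add: inner_commute)
  then have ui: "u (\<alpha> i) = 0" using wt by simp
  have "w \<bullet> w = 0"
    using ip[of w] split[of "\<lambda>j. u (\<alpha> j) * (\<alpha> j \<bullet> w)"] o ui
    by (simp add: inner_commute)
  then show ?thesis by simp
qed

theorem proposition4p9:
  fixes \<Phi> :: "'a::euclidean_space set" and \<alpha> :: "'i::finite \<Rightarrow> 'a"
    and lam :: 'a and m :: "'i \<Rightarrow> real" and i :: 'i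
  assumes "root_system \<Phi>" and "irreducible_rs \<Phi>" and "is_base \<Phi> \<alpha>"
    and "dominant_integral \<alpha> lam"
    and "lam = (\<Sum>j\<in>UNIV. m j *\<^sub>R \<alpha> j)"
  shows "(\<Sum>mu\<in>face_weights \<Phi> \<alpha> lam m i. mu) =
           (m i * real (card (face_weights \<Phi> \<alpha> lam m i))
              / (fund_weight_tilde \<alpha> i \<bullet> fund_weight_tilde \<alpha> i)) *\<^sub>R fund_weight_tilde \<alpha> i
       \<and> (\<exists>c::real. (1 / real (card (face_weights \<Phi> \<alpha> lam m i))) *\<^sub>R
                      (\<Sum>mu\<in>face_weights \<Phi> \<alpha> lam m i. mu) = c *\<^sub>R fund_weight_tilde \<alpha> i)"
proof -
  note rs = assms(1)
  have inj: "inj \<alpha>" and ind: "independent (range \<alpha>)" and rng: "range \<alpha> \<subseteq> \<Phi>"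
    using assms(3) unfolding is_base_def by auto
  have Phisp: "\<Phi> \<subseteq> span (range \<alpha>)"
  proof
    fix b assume "b \<in> \<Phi>"
    then obtain c :: "'i \<Rightarrow> int" where "b = (\<Sum>j\<in>UNIV. of_int (c j) *\<^sub>R \<alpha> j)"
      using assms(3) unfolding is_base_def by blast
    moreover have "(\<Sum>j\<in>UNIV. of_int (c j) *\<^sub>R \<alpha> j) \<in> span (range \<alpha>)"
      by (rule span_sum) (auto intro: span_mul span_base)
    ultimately show "b \<in> span (range \<alpha>)" by simp
  qed
  have b: "\<forall>j. \<alpha> j \<in> \<Phi>" using rng by auto
  have "0 \<notin> \<Phi>" using rs unfolding root_system_def by blast
  then have nz: "\<forall>j. \<alpha> j \<noteq> 0" using b by metis
  have lamsp: "lam \<in> span (range \<alpha>)"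
    using assms(4) unfolding dominant_integral_def by blast
  have lamint: "\<forall>j. cpair lam (\<alpha> j) \<in> \<int>"
  proof
    fix j
    obtain k :: nat where "cpair lam (\<alpha> j) = of_nat k"
      using assms(4) unfolding dominant_integral_def by blast
    then show "cpair lam (\<alpha> j) \<in> \<int>" by simp
  qed
  define t where "t = fund_weight_tilde \<alpha> i"
  define P where "P = face_weights \<Phi> \<alpha> lam m i"
  have fw: "fund_weight \<alpha> i \<in> span (range \<alpha>) \<and>
       (\<forall>j. cpair (fund_weight \<alpha> i) (\<alpha> j) = (if j = i then 1 else 0))"
    by (rule fund_weight_props[OF inj ind nz])
  have tsp: "t \<in> span (range \<alpha>)" using fw unfolding t_def fund_weight_tilde_def
    by (auto intro: span_mul)
  have tj: "t \<bullet> \<alpha> j = (if j = i then 1 else 0)" for j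
  proof -
    have "cpair (fund_weight \<alpha> i) (\<alpha> j) = (if j = i then 1 else 0)" using fw by auto
    moreover have "\<alpha> j \<bullet> \<alpha> j \<noteq> 0" "\<alpha> i \<bullet> \<alpha> i \<noteq> 0" using nz by auto
    ultimately show ?thesis unfolding t_def fund_weight_tilde_def cpair_def
      by (cases "j = i") (simp_all add: field_simps inner_commute)
  qed
  define v where "v = (\<Sum>mu\<in>P. mu)"
  have vsp: "v \<in> span (range \<alpha>)" unfolding v_def P_def face_weights_def
    by (rule span_sum) (use weights_span[OF Phisp lamsp] in auto)
  have vj: "v \<bullet> \<alpha> j = 0" if ji: "j \<noteq> i" for j
  proof -
    define r where "r = reflection (\<alpha> j)"
    have a0: "\<alpha> j \<noteq> 0" using nz by auto
    have rP: "r mu \<in> P" if "mu \<in> P" for mu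
    proof -
      have mw: "mu \<in> weights_of \<Phi> lam" and mt: "mu \<bullet> t = m i"
        using that unfolding P_def face_weights_def t_def by auto
      have "r mu \<in> weights_of \<Phi> lam" unfolding r_def
        by (rule weights_refl[OF rs b[rule_format] mw weights_int[OF rs b lamint mw]])
      moreover have "r mu \<bullet> t = m i"
      proof -
        have "\<alpha> j \<bullet> t = 0" using tj[of j] ji by (simp add: inner_commute)
        then show ?thesis using mt by (simp add: r_def reflection_def inner_diff_left)
      qed
      ultimately show ?thesis unfolding P_def face_weights_def t_def by auto
    qed
    have rr: "r (r mu) = mu" for mu unfolding r_def by (rule refl_invol[OF a0])
    have bij: "bij_betw r P P"
      by (rule bij_betwI[where g=r]) (auto simp: rP rr)
    have neg: "r mu \<bullet> \<alpha> j = - (mu \<bullet> \<alpha> j)" for mu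
      using a0 by (simp add: r_def reflection_def cpair_def inner_diff_left)
    have "(\<Sum>mu\<in>P. mu \<bullet> \<alpha> j) = (\<Sum>mu\<in>P. r mu \<bullet> \<alpha> j)"
      using sum.reindex_bij_betw[OF bij, of "\<lambda>mu. mu \<bullet> \<alpha> j"] by simp
    also have "\<dots> = - (\<Sum>mu\<in>P. mu \<bullet> \<alpha> j)" by (simp add: neg sum_negf)
    finally have "(\<Sum>mu\<in>P. mu \<bullet> \<alpha> j) = 0" by simp
    then show ?thesis unfolding v_def by (simp add: inner_sum_left)
  qed
  have vt: "v \<bullet> t = m i * real (card P)"
  proof -
    have "v \<bullet> t = (\<Sum>mu\<in>P. mu \<bullet> t)" unfolding v_def by (simp add: inner_sum_left)
    also have "\<dots> = (\<Sum>mu\<in>P. m i)"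
      by (rule sum.cong) (auto simp: P_def face_weights_def t_def)
    finally show ?thesis by simp
  qed
  have tt: "t \<bullet> t \<noteq> 0" using tj[of i] by auto
  define c where "c = m i * real (card P) / (t \<bullet> t)"
  have "v - c *\<^sub>R t = 0"
  proof (rule one_dim[OF inj, of _ i t])
    show "v - c *\<^sub>R t \<in> span (range \<alpha>)" using vsp tsp by (auto intro: span_diff span_mul)
    show "\<forall>j. j \<noteq> i \<longrightarrow> (v - c *\<^sub>R t) \<bullet> \<alpha> j = 0 \<and> t \<bullet> \<alpha> j = 0"
      using vj tj by (simp add: inner_diff_left)
    show "t \<bullet> \<alpha> i = 1" using tj[of i] by simp
    show "(v - c *\<^sub>R t) \<bullet> t = 0" using vt tt by (simp add: c_def inner_diff_left)
  qed
  then have main: "v = c *\<^sub>R t" by simp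
  show ?thesis
    unfolding P_def[symmetric] t_def[symmetric] v_def[symmetric] c_def[symmetric]
    using main by (intro conjI exI[of _ "c / real (card P)"]) simp_all
qed

end
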